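(* If $(A_n)_{n=0}^{\infty}$ is an Appell sequence, the following statements are equivalent: (a) for all integers $n\geq0$, $A_n=A^*_n$, i.e. the Appell sequence is self-dual; (b) for all partitions $\lambda$, $A_{\lambda}=A_{\lambda'}$, where $\lambda'$ is the conjugate partition; (c) for all even integers $n>0$, $c_n=0$.
   Context: An Appell sequence is a sequence of polynomials $(A_n)_{n\ge0}$ with $A_0=1$ and $A_n'=nA_{n-1}$ for $n\ge1$; it satisfies $\sum_k A_k(x)t^k/k!=e^{xt}f_A(t)$ with $f_A(0)=1$, and the constants $c_k$ are defined by $\log f_A(t)=\sum_{k\ge1}c_kt^k/k!$. For a partition $\lambda$ of length $r$, let $(n_1,\dots,n_r)=(\lambda_r,\lambda_{r-1}+1,\dots,\lambda_1+r-1)$ and $A_\lambda=\operatorname{Wr}[A_{n_1},\dots,A_{n_r}]/\Delta(n_1,\dots,n_r)$, where $\operatorname{Wr}$ is the Wronskian and $\Delta$ the Vandermonde determinant $\prod_{i<j}(x_j-x_i)$. The dual sequence is $A^*_n=A_{(1^n)}$, with $(1^n)=(1,\dots,1)$ ($n$ ones). *)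

theory Defs
  imports "HOL-Computational_Algebra.Polynomial"
          "HOL-Computational_Algebra.Formal_Power_Series"
          "Jordan_Normal_Form.Determinant"
begin

definition appell :: "(nat \<Rightarrow> complex poly) \<Rightarrow> bool" where
  "appell A \<longleftrightarrow> A 0 = 1 \<and> (\<forall>n\<ge>1. pderiv (A n) = smult (of_nat n) (A (n - 1)))"

text \<open>The series f_A(t) with sum_k A_k(x) t^k/k! = e^{xt} f_A(t); evaluating at x = 0
  gives f_A(t) = sum_k A_k(0) t^k / k!.\<close>
definition appell_f :: "(nat \<Rightarrow> complex poly) \<Rightarrow> complex fps" where
  "appell_f A = Abs_fps (\<lambda>k. poly (A k) 0 / fact k)"

definition fps_log :: "complex fps \<Rightarrow> complex fps" where
  "fps_log f = fps_integral (fps_deriv f / f) 0"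

definition appell_c :: "(nat \<Rightarrow> complex poly) \<Rightarrow> nat \<Rightarrow> complex" where
  "appell_c A k = fact k * fps_nth (fps_log (appell_f A)) k"

definition wronskian :: "nat \<Rightarrow> (nat \<Rightarrow> complex poly) \<Rightarrow> complex poly" where
  "wronskian r F = det (mat r r (\<lambda>(i, j). (pderiv ^^ i) (F j)))"

definition vandermonde :: "nat \<Rightarrow> (nat \<Rightarrow> nat) \<Rightarrow> complex" where
  "vandermonde r x = (\<Prod>j<r. \<Prod>i<j. of_nat (x j) - of_nat (x i))"

definition is_partition :: "nat list \<Rightarrow> bool" where
  "is_partition lam \<longleftrightarrow> sorted_wrt (\<ge>) lam \<and> (\<forall>x\<in>set lam. 0 < x)"

definition conj_partition :: "nat list \<Rightarrow> nat list" where
  "conj_partition lam =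
     map (\<lambda>j. length (filter (\<lambda>x. j \<le> x) lam)) [1..<Suc (if lam = [] then 0 else hd lam)]"

text \<open>The sequence (n_1,...,n_r) = (lambda_r, lambda_{r-1}+1, ..., lambda_1+r-1),
  zero-indexed: n_i = lambda_(r-i) + i - 1 (i = 1..r) becomes index i-1.\<close>
definition partition_degrees :: "nat list \<Rightarrow> nat \<Rightarrow> nat" where
  "partition_degrees lam i = lam ! (length lam - 1 - i) + i"

definition appell_partition :: "(nat \<Rightarrow> complex poly) \<Rightarrow> nat list \<Rightarrow> complex poly" where
  "appell_partition A lam =
     smult (1 / vandermonde (length lam) (partition_degrees lam))
       (wronskian (length lam) (\<lambda>i. A (partition_degrees lam i)))"

definition appell_dual :: "(nat \<Rightarrow> complex poly) \<Rightarrow> nat \<Rightarrow> complex poly" where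
  "appell_dual A n = appell_partition A (replicate n 1)"

end

theory Submission
  imports Defs
begin


lemma det_scale_rc:
  fixes a b :: "nat \<Rightarrow> 'a::comm_ring_1"
  shows "det (mat n n (\<lambda>(i,j). a i * b j * X i j)) =
         (\<Prod>i<n. a i) * (\<Prod>j<n. b j) * det (mat n n (\<lambda>(i,j). X i j))"
proof -
  have c1: "mat n n (\<lambda>(i,j). a i * b j * X i j) \<in> carrier_mat n n" by simp
  have c2: "mat n n (\<lambda>(i,j). X i j) \<in> carrier_mat n n" by simp
  have "det (mat n n (\<lambda>(i,j). a i * b j * X i j)) =
     (\<Sum>p\<in>{p. p permutes {0..<n}}. signof p * (\<Prod>i=0..<n. a i * b (p i) * X i (p i)))"
    unfolding det_def'[OF c1] by (intro sum.cong refl arg_cong2[where f="(*)"] prod.cong)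
      (auto simp: permutes_def)
  also have "\<dots> = (\<Sum>p\<in>{p. p permutes {0..<n}}. (\<Prod>i<n. a i) * (\<Prod>j<n. b j) * (signof p * (\<Prod>i=0..<n. X i (p i))))"
  proof (intro sum.cong refl)
    fix p assume "p \<in> {p. p permutes {0..<n}}"
    hence p: "p permutes {0..<n}" by simp
    have "(\<Prod>i=0..<n. b (p i)) = (\<Prod>j=0..<n. b j)"
      using prod.permute[OF p, of b] by (simp add: comp_def)
    thus "signof p * (\<Prod>i=0..<n. a i * b (p i) * X i (p i)) =
         (\<Prod>i<n. a i) * (\<Prod>j<n. b j) * (signof p * (\<Prod>i=0..<n. X i (p i)))"
      by (simp add: prod.distrib atLeast0LessThan)
  qed
  also have "\<dots> = (\<Prod>i<n. a i) * (\<Prod>j<n. b j) * det (mat n n (\<lambda>(i,j). X i j))"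
    unfolding det_def'[OF c2] sum_distrib_left
    by (intro sum.cong refl arg_cong2[where f="(*)"] prod.cong) (auto simp: permutes_def)
  finally show ?thesis .
qed

lemma det_reverse_both:
  fixes X :: "nat \<Rightarrow> nat \<Rightarrow> 'a::comm_ring_1"
  shows "det (mat n n (\<lambda>(i,j). X (n - 1 - i) (n - 1 - j))) = det (mat n n (\<lambda>(i,j). X i j))"
proof -
  define r where "r = (\<lambda>i. if i < n then n - 1 - i else i)"
  have rp: "r permutes {0..<n}"
  proof -
    have "bij_betw r {0..<n} {0..<n}"
      by (rule bij_betwI[where g=r]) (auto simp: r_def)
    moreover have "\<forall>x. x \<notin> {0..<n} \<longrightarrow> r x = x" by (auto simp: r_def)
    ultimately show ?thesis using bij_imp_permutes by blast
  qed
  have s2: "signof r * signof r = (1::'a)" by (simp add: sign_def)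
  let ?Y = "mat n n (\<lambda>(i,j). X i (n - 1 - j))"
  have "mat n n (\<lambda>(i,j). X (n - 1 - i) (n - 1 - j)) = mat n n (\<lambda>(i,j). ?Y $$ (r i, j))"
    by (intro eq_matI) (auto simp: r_def)
  hence e1: "det (mat n n (\<lambda>(i,j). X (n - 1 - i) (n - 1 - j))) = signof r * det ?Y"
    using det_permute_rows[OF _ rp, of ?Y] by simp
  let ?Z = "mat n n (\<lambda>(i,j). X j i)"
  have "transpose_mat ?Y = mat n n (\<lambda>(i,j). ?Z $$ (r i, j))"
    by (intro eq_matI) (auto simp: r_def)
  hence "det (transpose_mat ?Y) = signof r * det ?Z"
    using det_permute_rows[OF _ rp, of ?Z] by simp
  hence e2: "det ?Y = signof r * det ?Z" using det_transpose[of ?Y n] by simp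
  have "transpose_mat ?Z = mat n n (\<lambda>(i,j). X i j)" by (intro eq_matI) auto
  hence e3: "det ?Z = det (mat n n (\<lambda>(i,j). X i j))" using det_transpose[of ?Z n] by simp
  show ?thesis unfolding e1 e2 e3 by (simp add: mult.assoc[symmetric] s2)
qed



lemma strict_inc_ge: assumes "\<And>k. Suc k < M \<Longrightarrow> s k < s (Suc k)" and "k < M"
  shows "k \<le> s k"
  using assms(2) proof (induction k)
  case (Suc k) thus ?case using assms(1)[of k] by fastforce
qed simp

lemma strict_inc_gap: assumes "\<And>k. Suc k < M \<Longrightarrow> s k < s (Suc k)" and "k + d < M"
  shows "s k + d \<le> s (k + d)"
  using assms(2) proof (induction d)
  case (Suc d) thus ?case using assms(1)[of "k+d"] by fastforce
qed simp

lemma strict_inc_id: assumes "\<And>k. Suc k < M \<Longrightarrow> s k < s (Suc k)" and "\<And>k. k < M \<Longrightarrow> s k < M"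
  and "k < M" shows "s k = k"
proof -
  have "k \<le> s k" using strict_inc_ge[of M s k] assms(1,3) by blast
  moreover have "s k + (M - 1 - k) \<le> s (k + (M - 1 - k))"
    using strict_inc_gap[of M s k "M - 1 - k"] assms(1,3) by simp
  moreover have "s (k + (M - 1 - k)) < M" using assms(2)[of "k + (M - 1 - k)"] assms(3) by simp
  ultimately show ?thesis by linarith
qed

lemma det_unitcols:
  fixes C :: "nat \<Rightarrow> nat \<Rightarrow> 'a::comm_ring_1"
  assumes "r \<le> N"
    and "\<And>j. Suc j < r \<Longrightarrow> n j < n (Suc j)"
    and "\<And>k. Suc k < N - r \<Longrightarrow> s k < s (Suc k)"
    and "\<And>j. j < r \<Longrightarrow> n j < N"
    and "\<And>k. k < N - r \<Longrightarrow> s k < N"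
    and "\<And>j k. j < r \<Longrightarrow> k < N - r \<Longrightarrow> n j \<noteq> s k"
  shows "det (mat N N (\<lambda>(i,j). if j < r then (if i = n j then 1 else 0) else C i j)) =
         (\<Prod>j<r. (-1)^(n j - j)) * det (mat (N - r) (N - r) (\<lambda>(k,l). C (s k) (r + l)))"
  using assms
proof (induction r arbitrary: N n s C)
  case 0
  have sid: "s k = k" if "k < N" for k
    by (rule strict_inc_id[of N s]) (use 0 that in auto)
  have "mat N N (\<lambda>(k,l). C (s k) l) = mat N N (\<lambda>(i,j). C i j)"
    by (intro eq_matI) (simp_all add: sid)
  thus ?case by simp
next
  case (Suc r)
  define n0 where "n0 = n 0"
  have n0N: "n0 < N" using Suc.prems(4)[of 0] by (simp add: n0_def)
  define Q where "Q = mat N N (\<lambda>(i,j). if j < Suc r then (if i = n j then 1 else 0) else C i j)"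
  have Qc: "Q \<in> carrier_mat N N" by (simp add: Q_def)
  have "det Q = (\<Sum>i<N. Q $$ (i,0) * cofactor Q i 0)"
    by (rule laplace_expansion_column[OF Qc]) (use n0N in simp)
  also have "\<dots> = (\<Sum>i<N. if i = n0 then cofactor Q i 0 else 0)"
    by (intro sum.cong refl) (auto simp: Q_def n0_def)
  also have "\<dots> = cofactor Q n0 0" using n0N by simp
  also have "\<dots> = (-1)^n0 * det (mat_delete Q n0 0)" by (simp add: cofactor_def)
  finally have d1: "det Q = (-1)^n0 * det (mat_delete Q n0 0)" .
  define ins where "ins = (\<lambda>i'::nat. if i' < n0 then i' else Suc i')"
  define n' where "n' = (\<lambda>j. n (Suc j) - 1)"
  define s' where "s' = (\<lambda>k. if s k < n0 then s k else s k - 1)"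
  define C' where "C' = (\<lambda>i j. C (ins i) (Suc j))"
  have ngt: "n0 < n (Suc j)" if "Suc j < Suc r" for j
  proof -
    have "n 0 + Suc j \<le> n (0 + Suc j)"
      by (rule strict_inc_gap[of "Suc r" n]) (use Suc.prems(2) that in auto)
    thus ?thesis by (simp add: n0_def)
  qed
  have sne: "s k \<noteq> n0" if "k < N - Suc r" for k
    using Suc.prems(6)[of 0 k] that by (auto simp: n0_def)
  have md: "mat_delete Q n0 0 = mat (N - 1) (N - 1)
     (\<lambda>(i,j). if j < r then (if i = n' j then 1 else 0) else C' i j)"
  proof (intro eq_matI)
    fix i j assume ij: "i < dim_row (mat (N - 1) (N - 1)
     (\<lambda>(i,j). if j < r then (if i = n' j then 1 else 0) else C' i j))"
      "j < dim_col (mat (N - 1) (N - 1)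
     (\<lambda>(i,j). if j < r then (if i = n' j then 1 else 0) else C' i j))"
    hence i: "i < N - 1" and j: "j < N - 1" by auto
    show "mat_delete Q n0 0 $$ (i, j) = mat (N - 1) (N - 1)
     (\<lambda>(i,j). if j < r then (if i = n' j then 1 else 0) else C' i j) $$ (i, j)"
    proof (cases "j < r")
      case True
      have g: "n0 < n (Suc j)" using ngt[of j] True by simp
      have e: "((if i < n0 then i else Suc i) = n (Suc j)) = (i = n' j)" using g by (auto simp: n'_def)
      show ?thesis using i j True g unfolding mat_delete_def Q_def
        by (auto simp: n'_def)
    next
      case False
      thus ?thesis using i j unfolding mat_delete_def Q_def by (simp add: ins_def C'_def)
    qed
  qed (auto simp: Q_def)
  have IH: "det (mat (N - 1) (N - 1) (\<lambda>(i,j). if j < r then (if i = n' j then 1 else 0) else C' i j)) =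
     (\<Prod>j<r. (-1)^(n' j - j)) * det (mat (N - 1 - r) (N - 1 - r) (\<lambda>(k,l). C' (s' k) (r + l)))"
  proof (rule Suc.IH)
    show "r \<le> N - 1" using Suc.prems(1) by simp
    show "n' j < n' (Suc j)" if "Suc j < r" for j
      using Suc.prems(2)[of "Suc j"] ngt[of j] that by (simp add: n'_def)
    show "s' k < s' (Suc k)" if "Suc k < N - 1 - r" for k
      using Suc.prems(3)[of k] sne[of k] sne[of "Suc k"] that by (auto simp: s'_def)
    show "n' j < N - 1" if "j < r" for j
      using Suc.prems(4)[of "Suc j"] ngt[of j] that by (simp add: n'_def)
    show "s' k < N - 1" if "k < N - 1 - r" for k
      using Suc.prems(5)[of k] sne[of k] n0N that by (auto simp: s'_def)
    show "n' j \<noteq> s' k" if "j < r" "k < N - 1 - r" for j k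
      using Suc.prems(6)[of "Suc j" k] ngt[of j] sne[of k] that by (auto simp: s'_def n'_def)
  qed
  have ms: "mat (N - 1 - r) (N - 1 - r) (\<lambda>(k,l). C' (s' k) (r + l)) =
        mat (N - Suc r) (N - Suc r) (\<lambda>(k,l). C (s k) (Suc r + l))"
  proof (intro eq_matI)
    fix k l assume "k < dim_row (mat (N - Suc r) (N - Suc r) (\<lambda>(k,l). C (s k) (Suc r + l)))"
      "l < dim_col (mat (N - Suc r) (N - Suc r) (\<lambda>(k,l). C (s k) (Suc r + l)))"
    hence k: "k < N - Suc r" and l: "l < N - Suc r" by auto
    have "ins (s' k) = s k" using sne[OF k] by (auto simp: ins_def s'_def)
    thus "mat (N - 1 - r) (N - 1 - r) (\<lambda>(k,l). C' (s' k) (r + l)) $$ (k, l) =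
        mat (N - Suc r) (N - Suc r) (\<lambda>(k,l). C (s k) (Suc r + l)) $$ (k, l)"
      using k l by (simp add: C'_def)
  qed auto
  have pr: "(\<Prod>j<Suc r. (-1::'a)^(n j - j)) = (-1)^n0 * (\<Prod>j<r. (-1)^(n' j - j))"
    unfolding prod.lessThan_Suc_shift by (simp add: n'_def n0_def)
  show ?case using d1 unfolding Q_def[symmetric] md IH ms pr by (simp add: mult.assoc)
qed



lemma filter_ge_count:
  assumes "sorted_wrt (\<ge>) (lam::nat list)" and "i < length lam"
  shows "(i < length (filter (\<lambda>x. m \<le> x) lam)) = (m \<le> lam ! i)"
  using assms
proof (induction lam arbitrary: i)
  case Nil thus ?case by simp
next
  case (Cons a lam)
  have all: "\<forall>y\<in>set lam. y \<le> a" using Cons.prems(1) by simp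
  show ?case
  proof (cases "m \<le> a")
    case True
    show ?thesis
    proof (cases i)
      case 0 thus ?thesis using True by simp
    next
      case (Suc i')
      thus ?thesis using True Cons.IH[of i'] Cons.prems by simp
    qed
  next
    case False
    have "filter (\<lambda>x. m \<le> x) lam = []" using all False by (auto simp: filter_empty_conv)
    moreover have "\<not> m \<le> (a # lam) ! i"
    proof (cases i)
      case (Suc i')
      hence "(a # lam) ! i \<in> set lam" using Cons.prems(2) by simp
      thus ?thesis using all False by fastforce
    qed (use False in simp)
    ultimately show ?thesis using False by simp
  qed
qed

lemma sorted_le_hd:
  assumes "sorted_wrt (\<ge>) (lam::nat list)" and "i < length lam"
  shows "lam ! i \<le> hd lam"
  using assms by (cases lam; cases i) (auto simp: set_conv_nth)

lemma sorted_nth_mono: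
  assumes "sorted_wrt (\<ge>) (lam::nat list)" and "i \<le> j" "j < length lam"
  shows "lam ! j \<le> lam ! i"
  using assms by (metis le_neq_implies_less order.refl sorted_wrt_nth_less)

lemma conj_length: "length (conj_partition lam) = (if lam = [] then 0 else hd lam)"
  by (simp add: conj_partition_def)

lemma conj_nth: "k < length (conj_partition lam) \<Longrightarrow>
   conj_partition lam ! k = length (filter (\<lambda>x. Suc k \<le> x) lam)"
  by (auto simp: conj_partition_def simp del: upt_Suc split: if_splits)

definition hz :: "(nat \<Rightarrow> 'a::zero) \<Rightarrow> int \<Rightarrow> 'a" where
  "hz h k = (if k < 0 then 0 else h (nat k))"

definition JT :: "(nat \<Rightarrow> complex) \<Rightarrow> nat list \<Rightarrow> complex" where
  "JT h mu = det (mat (length mu) (length mu)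
      (\<lambda>(i,j). hz h (int (mu ! (length mu - 1 - j)) + int j - int i)))"



lemma filter_len_mono: "(\<And>x. P x \<Longrightarrow> Q x) \<Longrightarrow> length (filter P xs) \<le> length (filter Q xs)"
  by (induction xs) auto

lemma neg1_pow_diff: assumes "i \<le> m" shows "(-1::complex)^i * (-1)^m = (-1)^(m-i)"
proof -
  obtain d where m: "m = i + d" using assms le_Suc_ex by blast
  have "(-1::complex)^i * (-1)^i = 1" by (simp add: power_mult_distrib[symmetric])
  hence "(-1::complex)^i * ((-1)^i * (-1)^d) = (-1)^d" by (simp add: mult.assoc[symmetric])
  thus ?thesis by (simp add: m power_add)
qed

lemma conv_sum:
  fixes h e :: "nat \<Rightarrow> complex"
  assumes rel: "\<And>m. (\<Sum>a\<le>m. e a * ((-1)^(m-a) * h (m-a))) = (if m = 0 then 1 else 0)"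
    and j: "j < N"
  shows "(\<Sum>k<N. (if i \<le> k then e (k - i) else 0) * (if k \<le> j then (-1)^(j-k) * h (j-k) else 0))
         = (if i = j then 1 else 0)"
proof (cases "i \<le> j")
  case False
  have "(\<Sum>k<N. (if i \<le> k then e (k - i) else 0) * (if k \<le> j then (-1)^(j-k) * h (j-k) else 0)) = 0"
    by (intro sum.neutral) (use False in auto)
  thus ?thesis using False by simp
next
  case True
  have "(\<Sum>k<N. (if i \<le> k then e (k - i) else 0) * (if k \<le> j then (-1)^(j-k) * h (j-k) else 0))
      = (\<Sum>k\<in>{i..j}. e (k - i) * ((-1)^(j-k) * h (j-k)))"
    by (rule sum.mono_neutral_cong_right) (use j in auto)
  also have "\<dots> = (\<Sum>a\<in>{0..j-i}. e a * ((-1)^((j-i)-a) * h ((j-i)-a)))"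
  proof -
    have "(\<Sum>k\<in>{i..j}. e (k - i) * ((-1)^(j-k) * h (j-k))) =
          (\<Sum>a\<in>(\<lambda>a. a + i) ` {0..j-i}. e (a - i) * ((-1)^(j-a) * h (j-a)))"
      by (intro sum.cong refl) (use True in \<open>auto simp: image_iff intro!: bexI[where x="_ - i"]\<close>)
    also have "\<dots> = (\<Sum>a\<in>{0..j-i}. e a * ((-1)^((j-i)-a) * h ((j-i)-a)))"
      by (subst sum.reindex) (auto simp: inj_on_def add.commute)
    finally show ?thesis .
  qed
  also have "\<dots> = (if i = j then 1 else 0)" using rel[of "j - i"] True
    by (simp add: atLeast0AtMost)
  finally show ?thesis .
qed

lemma dual_JT:
  fixes h e :: "nat \<Rightarrow> complex"
  assumes lp: "is_partition lam"
    and e0: "e 0 = 1"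
    and rel: "\<And>m. (\<Sum>a\<le>m. e a * ((-1)^(m-a) * h (m-a))) = (if m = 0 then 1 else 0)"
  shows "JT h lam = JT e (conj_partition lam)"
proof (cases "lam = []")
  case True
  thus ?thesis by (simp add: JT_def conj_partition_def)
next
  case False
  define r where "r = length lam"
  define c where "c = hd lam"
  define lc where "lc = conj_partition lam"
  define N where "N = r + c"
  have srt: "sorted_wrt (\<ge>) lam" and pos: "\<forall>x\<in>set lam. 0 < x"
    using lp by (auto simp: is_partition_def)
  have lcl: "length lc = c" using False by (simp add: lc_def c_def conj_length)
  have lck: "lc ! k = length (filter (\<lambda>x. Suc k \<le> x) lam)" if "k < c" for k
    using conj_nth[of k lam] that lcl by (simp add: lc_def)
  have lcr: "lc ! k \<le> r" if "k < c" for k using lck[OF that] by (simp add: r_def)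
  have lciff: "(i < lc ! k) = (Suc k \<le> lam ! i)" if "k < c" "i < r" for i k
    using lck[OF that(1)] filter_ge_count[OF srt, of i "Suc k"] that(2) by (simp add: r_def)
  define n where "n = (\<lambda>j. lam ! (r - 1 - j) + j)"
  define s where "s = (\<lambda>k. r + k - lc ! k)"
  have rpos: "0 < r" using False by (simp add: r_def)
  have lamc: "lam ! i \<le> c" if "i < r" for i using sorted_le_hd[OF srt, of i] that by (simp add: r_def c_def)
  have n_mono: "n j < n (Suc j)" if "Suc j < r" for j
  proof -
    have "lam ! (r - 1 - j) \<le> lam ! (r - 1 - Suc j)"
      by (rule sorted_nth_mono[OF srt]) (use that in \<open>auto simp: r_def\<close>)
    thus ?thesis by (simp add: n_def)
  qed
  have lc_mono: "lc ! (Suc k) \<le> lc ! k" if "Suc k < c" for k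
  proof -
    have "length (filter (\<lambda>x. Suc (Suc k) \<le> x) lam) \<le> length (filter (\<lambda>x. Suc k \<le> x) lam)"
      by (rule filter_len_mono) auto
    thus ?thesis using lck[of k] lck[of "Suc k"] that by simp
  qed
  have s_mono: "s k < s (Suc k)" if "Suc k < c" for k
    using lc_mono[OF that] lcr[of k] lcr[of "Suc k"] that by (simp add: s_def)
  have nN: "n j < N" if "j < r" for j
    using lamc[of "r - 1 - j"] that by (simp add: n_def N_def)
  have sN: "s k < N" if "k < c" for k using that by (simp add: s_def N_def)
  have disj: "n j \<noteq> s k" if "j < r" "k < c" for j k
  proof
    assume eq: "n j = s k"
    define i where "i = r - 1 - j"
    have ir: "i < r" using that by (simp add: i_def)
    have eq2: "lam ! i + lc ! k = i + k + 1"
      using eq lcr[OF that(2)] that by (simp add: n_def s_def i_def)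
    show False
    proof (cases "Suc k \<le> lam ! i")
      case True
      hence "i < lc ! k" using lciff[OF that(2) ir] by simp
      thus False using eq2 True by linarith
    next
      case False
      hence "\<not> i < lc ! k" using lciff[OF that(2) ir] by simp
      thus False using eq2 False by linarith
    qed
  qed
  define Ht where "Ht = (\<lambda>i j. if i \<le> j then (-1)^(j-i) * h (j-i) else (0::complex))"
  define Et where "Et = (\<lambda>i j. if i \<le> j then e (j-i) else (0::complex))"
  define Hm where "Hm = mat r r (\<lambda>(i,j). Ht i (n j))"
  define MM where "MM = mat N N (\<lambda>(i,j). if j < r then Ht i (n j) else if i = j then 1 else 0)"
  define EM where "EM = mat N N (\<lambda>(i,j). Et i j)"
  define Q where "Q = mat N N (\<lambda>(i,j). if j < r then (if i = n j then 1 else 0) else Et i j)"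
  define B where "B = mat c c (\<lambda>(k,l). Et (s k) (r + l))"
  have NrC: "N - r = c" by (simp add: N_def)
  have detMM: "det MM = det Hm"
  proof -
    have "MM = four_block_mat Hm (0\<^sub>m r c) (mat c r (\<lambda>(i,j). Ht (i + r) (n j))) (1\<^sub>m c)"
      by (intro eq_matI) (auto simp: MM_def Hm_def N_def)
    moreover have "det (four_block_mat Hm (0\<^sub>m r c) (mat c r (\<lambda>(i,j). Ht (i + r) (n j))) (1\<^sub>m c))
       = det Hm * det (1\<^sub>m c :: complex mat)"
      by (rule det_four_block_mat_upper_right_zero) (auto simp: Hm_def)
    ultimately show ?thesis by simp
  qed
  have detEM: "det EM = 1"
  proof -
    have "upper_triangular EM" by (auto simp: upper_triangular_def EM_def Et_def)
    moreover have "EM \<in> carrier_mat N N" by (simp add: EM_def)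
    ultimately have "det EM = prod_list (diag_mat EM)" by (rule det_upper_triangular)
    also have "diag_mat EM = replicate N 1"
      by (rule nth_equalityI) (auto simp: diag_mat_def EM_def Et_def e0)
    finally show ?thesis by simp
  qed
  have EMQ: "EM * MM = Q"
  proof (intro eq_matI)
    fix i j assume "i < dim_row Q" "j < dim_col Q"
    hence i: "i < N" and j: "j < N" by (auto simp: Q_def)
    have "(EM * MM) $$ (i,j) = (\<Sum>k<N. Et i k * MM $$ (k, j))"
      using i j by (simp add: EM_def MM_def scalar_prod_def atLeast0LessThan times_mat_def)
    also have "\<dots> = Q $$ (i,j)"
    proof (cases "j < r")
      case True
      have "(\<Sum>k<N. Et i k * MM $$ (k, j)) = (\<Sum>k<N. Et i k * Ht k (n j))"
        by (intro sum.cong refl) (use True j in \<open>simp add: MM_def\<close>)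
      also have "\<dots> = (if i = n j then 1 else 0)"
        unfolding Et_def Ht_def by (rule conv_sum[OF rel nN[OF True]])
      finally show ?thesis using True i j by (simp add: Q_def)
    next
      case False
      have "(\<Sum>k<N. Et i k * MM $$ (k, j)) = (\<Sum>k<N. if k = j then Et i j else 0)"
        by (intro sum.cong refl) (use False j in \<open>simp add: MM_def\<close>)
      also have "\<dots> = Et i j" using j by simp
      finally show ?thesis using False i j by (simp add: Q_def)
    qed
    finally show "(EM * MM) $$ (i,j) = Q $$ (i,j)" .
  qed (auto simp: EM_def MM_def Q_def)
  have detQ1: "det Q = det Hm"
  proof -
    have "det (EM * MM) = det EM * det MM" by (rule det_mult) (auto simp: EM_def MM_def)
    thus ?thesis using EMQ detEM detMM by simp
  qed
  have detQ2: "det Q = (\<Prod>j<r. (-1)^(n j - j)) * det B"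
  proof -
    have "det Q = (\<Prod>j<r. (-1)^(n j - j)) * det (mat (N - r) (N - r) (\<lambda>(k,l). Et (s k) (r + l)))"
      unfolding Q_def
      by (rule det_unitcols) (use n_mono s_mono nN sN disj in \<open>auto simp: NrC N_def\<close>)
    thus ?thesis by (simp add: B_def NrC)
  qed
  have detHm: "det Hm = (\<Prod>j<r. (-1)^(n j - j)) * JT h lam"
  proof -
    have "Hm = mat r r (\<lambda>(i,j). (-1)^i * (-1)^(n j) * hz h (int (lam ! (r - 1 - j)) + int j - int i))"
    proof (intro eq_matI)
      fix i j assume "i < dim_row (mat r r (\<lambda>(i,j). (-1::complex)^i * (-1)^(n j) * hz h (int (lam ! (r - 1 - j)) + int j - int i)))"
        "j < dim_col (mat r r (\<lambda>(i,j). (-1::complex)^i * (-1)^(n j) * hz h (int (lam ! (r - 1 - j)) + int j - int i)))"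
      hence i: "i < r" and j: "j < r" by auto
      show "Hm $$ (i,j) = mat r r (\<lambda>(i,j). (-1)^i * (-1)^(n j) * hz h (int (lam ! (r - 1 - j)) + int j - int i)) $$ (i,j)"
      proof (cases "i \<le> n j")
        case True
        have p: "(-1::complex)^i * (-1)^(n j) = (-1)^(n j - i)"
          using neg1_pow_diff[OF True] .
        have hzv: "hz h (int (lam ! (r - 1 - j)) + int j - int i) = h (n j - i)"
        proof -
          have "int (lam ! (r - 1 - j)) + int j - int i = int (n j - i)" using True by (simp add: n_def)
          thus ?thesis by (simp add: hz_def)
        qed
        show ?thesis using i j True hzv p by (simp add: Hm_def Ht_def)
      next
        case False
        have hzv: "hz h (int (lam ! (r - 1 - j)) + int j - int i) = 0"
          using False by (simp add: hz_def n_def)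
        show ?thesis using i j False hzv by (simp add: Hm_def Ht_def)
      qed
    qed (auto simp: Hm_def)
    hence "det Hm = (\<Prod>i<r. (-1)^i) * (\<Prod>j<r. (-1)^(n j)) * JT h lam"
      by (simp add: det_scale_rc JT_def r_def)
    also have "(\<Prod>i<r. (-1::complex)^i) * (\<Prod>j<r. (-1)^(n j)) = (\<Prod>j<r. (-1)^(n j - j))"
    proof -
      have "(-1::complex)^j * (-1)^(n j) = (-1)^(n j - j)" for j
        by (rule neg1_pow_diff) (simp add: n_def)
      thus ?thesis by (simp add: prod.distrib[symmetric])
    qed
    finally show ?thesis .
  qed
  have sgn: "(\<Prod>j<r. (-1::complex)^(n j - j)) \<noteq> 0" by simp
  have "JT h lam = det B" using detQ1 detQ2 detHm sgn by simp
  also have "det B = JT e lc"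
  proof -
    define Y where "Y = (\<lambda>k l. hz e (int (lc ! l) - int l + int k))"
    have "JT e lc = det (mat c c (\<lambda>(i,j). Y (c - 1 - i) (c - 1 - j)))"
      unfolding JT_def lcl
    proof (intro arg_cong[where f=det] eq_matI)
      fix i j assume "i < dim_row (mat c c (\<lambda>(i,j). Y (c - 1 - i) (c - 1 - j)))"
        "j < dim_col (mat c c (\<lambda>(i,j). Y (c - 1 - i) (c - 1 - j)))"
      hence i: "i < c" and j: "j < c" by auto
      have "int (lc ! (c-1-j)) + int j - int i = int (lc ! (c - 1 - j)) - int (c - 1 - j) + int (c - 1 - i)"
        using i j by linarith
      thus "mat c c (\<lambda>(i,j). hz e (int (lc ! (c - 1 - j)) + int j - int i)) $$ (i,j) =
            mat c c (\<lambda>(i,j). Y (c - 1 - i) (c - 1 - j)) $$ (i,j)"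
        using i j by (simp only: index_mat split Y_def)
    qed auto
    also have "\<dots> = det (mat c c (\<lambda>(i,j). Y i j))" by (rule det_reverse_both)
    also have "mat c c (\<lambda>(i,j). Y i j) = transpose_mat B"
    proof (intro eq_matI)
      fix i j assume "i < dim_row (transpose_mat B)" "j < dim_col (transpose_mat B)"
      hence i: "i < c" and j: "j < c" by (auto simp: B_def)
      have "Et (s j) (r + i) = Y i j"
        using lcr[OF j] by (auto simp: Et_def s_def Y_def hz_def intro!: arg_cong[where f=e])
      thus "mat c c (\<lambda>(i,j). Y i j) $$ (i,j) = transpose_mat B $$ (i,j)"
        using i j by (simp add: B_def)
    qed (auto simp: B_def)
    also have "det (transpose_mat B) = det B" by (rule det_transpose[of B c]) (simp add: B_def)
    finally show ?thesis by simp
  qed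
  finally show ?thesis by (simp add: lc_def)
qed



definition ffp :: "complex \<Rightarrow> nat \<Rightarrow> complex" where
  "ffp y i = (\<Prod>k<i. (y - of_nat k))"

lemma ffp_Suc: "ffp y (Suc i) = ffp y i * (y - of_nat i)"
  by (simp add: ffp_def)

lemma mat_mult_entry:
  assumes "A \<in> carrier_mat n m" "B \<in> carrier_mat m p" "i < n" "j < p"
  shows "(A * B) $$ (i,j) = (\<Sum>k<m. A $$ (i,k) * B $$ (k,j))"
  using assms by (simp add: scalar_prod_def atLeast0LessThan)

lemma vandermonde_ffp:
  "det (mat r r (\<lambda>(i,j). ffp (x j) i)) = (\<Prod>j<r. \<Prod>i<j. (x j - x i))"
proof (induction r arbitrary: x)
  case 0 thus ?case by simp
next
  case (Suc r)
  define V where "V = mat (Suc r) (Suc r) (\<lambda>(i,j). ffp (x j) i)"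
  define L where "L = mat (Suc r) (Suc r) (\<lambda>(i,k). if k = i then 1 else if Suc k = i then - (x 0 - of_nat k) else 0)"
  define W where "W = mat (Suc r) (Suc r) (\<lambda>(i,j). if i = 0 then 1 else ffp (x j) (i - 1) * (x j - x 0))"
  have Vc: "V \<in> carrier_mat (Suc r) (Suc r)" and Lc: "L \<in> carrier_mat (Suc r) (Suc r)"
    by (auto simp: V_def L_def)
  have detL: "det L = 1"
  proof -
    have "det L = prod_list (diag_mat L)"
      by (rule det_lower_triangular[OF _ Lc]) (auto simp: L_def)
    also have "diag_mat L = replicate (Suc r) 1"
      by (rule nth_equalityI) (auto simp: diag_mat_def L_def simp del: upt_Suc replicate_Suc)
    finally show ?thesis by simp
  qed
  have LV: "L * V = W"
  proof (intro eq_matI)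
    fix i j assume "i < dim_row W" "j < dim_col W"
    hence i: "i < Suc r" and j: "j < Suc r" by (auto simp: W_def)
    have "(L * V) $$ (i,j) = (\<Sum>k<Suc r. L $$ (i,k) * V $$ (k,j))"
      by (rule mat_mult_entry[OF Lc Vc i j])
    also have "\<dots> = (\<Sum>k<Suc r. (if k = i then ffp (x j) k else 0) +
          (if Suc k = i then - (x 0 - of_nat k) * ffp (x j) k else 0))"
      by (intro sum.cong refl) (use i j in \<open>auto simp: L_def V_def\<close>)
    also have "\<dots> = ffp (x j) i + (if i = 0 then 0 else - (x 0 - of_nat (i - 1)) * ffp (x j) (i - 1))"
    proof -
      have a: "(\<Sum>k<Suc r. (if k = i then ffp (x j) k else 0)) = ffp (x j) i"
        using i by (simp add: sum.delta)
      have b: "(\<Sum>k<Suc r. (if Suc k = i then - (x 0 - of_nat k) * ffp (x j) k else 0)) =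
          (if i = 0 then 0 else - (x 0 - of_nat (i - 1)) * ffp (x j) (i - 1))"
      proof (cases i)
        case 0 thus ?thesis by simp
      next
        case (Suc i')
        have "(\<Sum>k<Suc r. (if Suc k = i then - (x 0 - of_nat k) * ffp (x j) k else 0)) =
              (\<Sum>k<Suc r. (if k = i' then - (x 0 - of_nat k) * ffp (x j) k else 0))"
          by (intro sum.cong refl) (auto simp: Suc)
        also have "\<dots> = - (x 0 - of_nat i') * ffp (x j) i'" using i Suc by (simp add: sum.delta)
        finally show ?thesis using Suc by simp
      qed
      show ?thesis unfolding sum.distrib a b ..
    qed
    also have "\<dots> = W $$ (i,j)"
    proof (cases i)
      case 0 thus ?thesis using j by (simp add: W_def ffp_def)
    next
      case (Suc i')
      thus ?thesis using i j by (simp add: W_def ffp_Suc algebra_simps)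
    qed
    finally show "(L * V) $$ (i,j) = W $$ (i,j)" .
  qed (auto simp: L_def V_def W_def)
  have "det W = det L * det V" unfolding LV[symmetric] by (rule det_mult[OF Lc Vc])
  hence dV: "det V = det W" using detL by simp
  have Wc: "W \<in> carrier_mat (Suc r) (Suc r)" by (simp add: W_def)
  have "det W = (\<Sum>i<Suc r. W $$ (i,0) * cofactor W i 0)"
    by (rule laplace_expansion_column[OF Wc]) simp
  also have "\<dots> = (\<Sum>i<Suc r. if i = 0 then cofactor W i 0 else 0)"
    by (intro sum.cong refl) (auto simp: W_def)
  also have "\<dots> = det (mat_delete W 0 0)" by (simp add: cofactor_def)
  also have "mat_delete W 0 0 = mat r r (\<lambda>(i,j). 1 * (x (Suc j) - x 0) * ffp (x (Suc j)) i)"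
    by (intro eq_matI) (auto simp: mat_delete_def W_def)
  also have "det \<dots> = (\<Prod>j<r. (x (Suc j) - x 0)) * det (mat r r (\<lambda>(i,j). ffp ((x \<circ> Suc) j) i))"
    by (subst det_scale_rc) simp
  also have "\<dots> = (\<Prod>j<r. (x (Suc j) - x 0)) * (\<Prod>j<r. \<Prod>i<j. (x (Suc j) - x (Suc i)))"
    by (simp add: Suc.IH)
  also have "\<dots> = (\<Prod>j<Suc r. \<Prod>i<j. (x j - x i))"
    by (simp only: prod.lessThan_Suc_shift) (simp add: prod.distrib)
  finally show ?case using dV by (simp add: V_def)
qed



lemma ffp_nat: "ffp (of_nat m) i = (if i \<le> m then fact m / fact (m - i) else 0)"
proof (induction i)
  case 0 thus ?case by (simp add: ffp_def)
next
  case (Suc i)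
  show ?case
  proof (cases "Suc i \<le> m")
    case True
    have f: "(fact (m - i) :: complex) = of_nat (m - i) * fact (m - Suc i)"
      using True by (metis Suc_diff_Suc Suc_le_lessD fact_Suc of_nat_fact of_nat_mult)
    have "ffp (of_nat m) (Suc i) = fact m / fact (m - i) * (of_nat m - of_nat i)"
      using Suc True by (simp add: ffp_Suc)
    also have "(of_nat m - of_nat i :: complex) = of_nat (m - i)" using True by (simp add: of_nat_diff)
    also have "fact m / fact (m - i) * (of_nat (m - i) :: complex) = fact m / fact (m - Suc i)"
      unfolding f using True by (simp add: field_simps)
    finally show ?thesis using True by simp
  next
    case False
    show ?thesis
    proof (cases "i = m")
      case True thus ?thesis by (simp add: ffp_Suc)
    next
      case False
      thus ?thesis using Suc \<open>\<not> Suc i \<le> m\<close> by (simp add: ffp_Suc)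
    qed
  qed
qed

lemma appell_higher_pderiv:
  assumes ap: "appell A"
  shows "(pderiv ^^ i) (A m) = smult (ffp (of_nat m) i) (A (m - i))"
proof (induction i)
  case 0 thus ?case by (simp add: ffp_def)
next
  case (Suc i)
  have "(pderiv ^^ Suc i) (A m) = pderiv (smult (ffp (of_nat m) i) (A (m - i)))"
    using Suc by simp
  also have "\<dots> = smult (ffp (of_nat m) i) (pderiv (A (m - i)))" by (simp add: pderiv_smult)
  also have "\<dots> = smult (ffp (of_nat m) (Suc i)) (A (m - Suc i))"
  proof (cases "i < m")
    case True
    have "pderiv (A (m - i)) = smult (of_nat (m - i)) (A (m - i - 1))"
      using ap True by (simp add: appell_def)
    moreover have "(of_nat (m - i) :: complex) = of_nat m - of_nat i" using True by (simp add: of_nat_diff)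
    ultimately show ?thesis by (simp add: ffp_Suc mult.commute)
  next
    case False
    have "A (m - i) = 1" using ap False by (simp add: appell_def)
    moreover have "ffp (of_nat m) (Suc i) = 0" using False by (simp add: ffp_nat)
    ultimately show ?thesis by simp
  qed
  finally show ?case .
qed

definition hA :: "(nat \<Rightarrow> complex poly) \<Rightarrow> complex \<Rightarrow> nat \<Rightarrow> complex" where
  "hA A x k = poly (A k) x / fact k"

definition h1 :: "nat \<Rightarrow> complex" where "h1 k = 1 / fact k"

lemma ffp_hz: "ffp (of_nat m) i = fact m * hz h1 (int m - int i)"
  by (auto simp: ffp_nat hz_def h1_def nat_diff_distrib)

lemma poly_pderiv_hz:
  assumes "appell A"
  shows "poly ((pderiv ^^ i) (A m)) x = fact m * hz (hA A x) (int m - int i)"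
  by (auto simp: appell_higher_pderiv[OF assms] ffp_nat hz_def hA_def nat_diff_distrib)

lemma poly_appell_partition:
  assumes ap: "appell A"
  shows "poly (appell_partition A lam) x = JT (hA A x) lam / JT h1 lam"
proof -
  define r where "r = length lam"
  define pd where "pd = partition_degrees lam"
  define P where "P = (\<Prod>j<r. (fact (pd j) :: complex))"
  have Pnz: "P \<noteq> 0" by (simp add: P_def)
  have pdj: "int (pd j) = int (lam ! (r - 1 - j)) + int j" for j
    by (simp add: pd_def partition_degrees_def r_def)
  have hom: "comm_ring_hom (\<lambda>p. poly p x)" by unfold_locales auto
  have W: "poly (wronskian r (\<lambda>i. A (pd i))) x = P * JT (hA A x) lam"
  proof -
    have "poly (wronskian r (\<lambda>i. A (pd i))) x =
        det (map_mat (\<lambda>p. poly p x) (mat r r (\<lambda>(i, j). (pderiv ^^ i) (A (pd j)))))"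
      unfolding wronskian_def by (rule comm_ring_hom.hom_det[OF hom, symmetric])
    also have "map_mat (\<lambda>p. poly p x) (mat r r (\<lambda>(i, j). (pderiv ^^ i) (A (pd j)))) =
       mat r r (\<lambda>(i,j). 1 * fact (pd j) * hz (hA A x) (int (lam ! (r - 1 - j)) + int j - int i))"
      by (intro eq_matI) (auto simp: poly_pderiv_hz[OF ap] pdj)
    also have "det \<dots> = P * JT (hA A x) lam"
      by (subst det_scale_rc) (simp add: P_def JT_def r_def)
    finally show ?thesis .
  qed
  have V: "vandermonde r pd = P * JT h1 lam"
  proof -
    have "vandermonde r pd = det (mat r r (\<lambda>(i,j). ffp (of_nat (pd j)) i))"
      by (simp add: vandermonde_def vandermonde_ffp)
    also have "mat r r (\<lambda>(i,j). ffp (of_nat (pd j)) i) =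
       mat r r (\<lambda>(i,j). 1 * fact (pd j) * hz h1 (int (lam ! (r - 1 - j)) + int j - int i))"
      by (intro eq_matI) (auto simp: ffp_hz pdj)
    also have "det \<dots> = P * JT h1 lam"
      by (subst det_scale_rc) (simp add: P_def JT_def r_def)
    finally show ?thesis .
  qed
  show ?thesis
    unfolding appell_partition_def r_def[symmetric] pd_def[symmetric]
    using Pnz by (simp add: W V)
qed



no_notation vec_index (infixl "$" 100)
notation fps_nth (infixl "$" 75)

definition fneg :: "complex fps \<Rightarrow> complex fps" where
  "fneg f = Abs_fps (\<lambda>k. (-1)^k * f $ k)"

lemma fneg_nth[simp]: "fneg f $ k = (-1)^k * f $ k" by (simp add: fneg_def)

lemma fneg_mult: "fneg (f * g) = fneg f * fneg g"
proof (rule fps_ext)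
  fix n
  have "fneg (f * g) $ n = (\<Sum>i=0..n. (-1)^n * (f$i * g$(n-i)))"
    by (simp add: fps_mult_nth sum_distrib_left)
  also have "\<dots> = (\<Sum>i=0..n. ((-1)^i * f$i) * ((-1)^(n-i) * g$(n-i)))"
  proof (intro sum.cong refl)
    fix i assume "i \<in> {0..n}"
    hence "(-1::complex)^n = (-1)^i * (-1)^(n-i)" by (simp add: power_add[symmetric])
    thus "(-1)^n * (f$i * g$(n-i)) = ((-1)^i * f$i) * ((-1)^(n-i) * g$(n-i))" by (simp add: algebra_simps)
  qed
  also have "\<dots> = (fneg f * fneg g) $ n" by (simp add: fps_mult_nth)
  finally show "fneg (f * g) $ n = (fneg f * fneg g) $ n" .
qed

lemma fneg_one[simp]: "fneg 1 = 1" by (rule fps_ext) (simp add: fps_one_nth)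
lemma fneg_fneg[simp]: "fneg (fneg f) = f"
  by (rule fps_ext) (simp add: mult.assoc[symmetric] power_mult_distrib[symmetric])
lemma fneg_add: "fneg (f + g) = fneg f + fneg g" by (rule fps_ext) (simp add: algebra_simps)
lemma fneg_0_nth: "fneg f $ 0 = f $ 0" by simp

lemma fneg_inverse: assumes "f $ 0 \<noteq> 0" shows "fneg (inverse f) = inverse (fneg f)"
proof -
  have "fneg f * fneg (inverse f) = 1"
    using inverse_mult_eq_1'[OF assms] by (simp add: fneg_mult[symmetric])
  thus ?thesis using fps_inverse_unique by metis
qed

lemma fneg_deriv: "fps_deriv (fneg f) = - fneg (fps_deriv f)"
  by (rule fps_ext) (simp add: fps_deriv_nth algebra_simps)

lemma fps_exp_zero': "fps_exp (0::complex) = 1"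
  by (rule fps_ext) (simp add: fps_one_nth)

lemma fneg_exp: "fneg (fps_exp x) = fps_exp (- x)"
  by (rule fps_ext) (simp add: power_mult_distrib[symmetric])

lemma exp_times_exp_neg: "fps_exp (x::complex) * fps_exp (- x) = 1"
  using fps_exp_add_mult[of x "-x"] by (simp add: fps_exp_zero')

lemma appell_coeff:
  assumes ap: "appell A"
  shows "coeff (A n) m = ffp (of_nat n) m * poly (A (n - m)) 0 / fact m"
proof -
  have "coeff ((pderiv ^^ m) (A n)) 0 = pochhammer (of_nat 1) m * coeff (A n) m"
    using coeff_higher_pderiv[of m "A n" 0] by simp
  hence "fact m * coeff (A n) m = coeff ((pderiv ^^ m) (A n)) 0"
    by (simp add: pochhammer_fact)
  also have "\<dots> = ffp (of_nat n) m * poly (A (n - m)) 0"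
    by (simp add: appell_higher_pderiv[OF ap] poly_0_coeff_0)
  finally show ?thesis by (simp add: field_simps)
qed

lemma appell_poly_expand:
  assumes ap: "appell A"
  shows "poly (A n) x = (\<Sum>i\<le>n. coeff (A n) i * x ^ i)"
proof -
  have deg: "degree (A n) \<le> n"
    by (rule degree_le) (auto simp: appell_coeff[OF ap] ffp_nat)
  have "poly (A n) x = (\<Sum>i\<le>degree (A n). coeff (A n) i * x ^ i)" by (rule poly_altdef)
  also have "\<dots> = (\<Sum>i\<le>n. coeff (A n) i * x ^ i)"
    by (rule sum.mono_neutral_left) (use deg in \<open>auto simp: coeff_eq_0\<close>)
  finally show ?thesis .
qed

definition Hs :: "(nat \<Rightarrow> complex poly) \<Rightarrow> complex \<Rightarrow> complex fps" where
  "Hs A x = Abs_fps (hA A x)"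

lemma Hs_exp:
  assumes ap: "appell A"
  shows "Hs A x = fps_exp x * appell_f A"
proof (rule fps_ext)
  fix n
  have "Hs A x $ n = (\<Sum>i\<le>n. coeff (A n) i * x ^ i) / fact n"
    by (simp add: Hs_def hA_def appell_poly_expand[OF ap])
  also have "\<dots> = (\<Sum>i=0..n. x^i / fact i * (poly (A (n - i)) 0 / fact (n - i)))"
    unfolding sum_divide_distrib atLeast0AtMost
  proof (intro sum.cong refl)
    fix i assume "i \<in> {..n}"
    hence i: "i \<le> n" by simp
    have "(fact n :: complex) \<noteq> 0" "(fact (n - i) :: complex) \<noteq> 0" "(fact i :: complex) \<noteq> 0" by auto
    thus "coeff (A n) i * x ^ i / fact n = x ^ i / fact i * (poly (A (n - i)) 0 / fact (n - i))"
      using i by (simp add: appell_coeff[OF ap] ffp_nat field_simps)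
  qed
  also have "\<dots> = (fps_exp x * appell_f A) $ n"
    by (simp add: fps_mult_nth appell_f_def)
  finally show "Hs A x $ n = (fps_exp x * appell_f A) $ n" .
qed

lemma appell_f_0: "appell A \<Longrightarrow> appell_f A $ 0 = 1"
  by (simp add: appell_f_def appell_def)

lemma Hs_0: "appell A \<Longrightarrow> Hs A x $ 0 = 1"
  by (simp add: Hs_def hA_def appell_def)

definition eA :: "(nat \<Rightarrow> complex poly) \<Rightarrow> complex \<Rightarrow> nat \<Rightarrow> complex" where
  "eA A x k = inverse (fneg (Hs A x)) $ k"

lemma eA_0: "appell A \<Longrightarrow> eA A x 0 = 1"
  by (simp add: eA_def Hs_0)

lemma eA_rel:
  assumes ap: "appell A"
  shows "(\<Sum>a\<le>m. eA A x a * ((-1)^(m-a) * hA A x (m-a))) = (if m = 0 then 1 else 0)"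
proof -
  have "(inverse (fneg (Hs A x)) * fneg (Hs A x)) $ m = (if m = 0 then 1 else 0)"
    using inverse_mult_eq_1[of "fneg (Hs A x)"] Hs_0[OF ap] by (simp add: fps_one_nth)
  thus ?thesis by (simp add: fps_mult_nth eA_def Hs_def atLeast0AtMost)
qed

lemma eA_rel':
  assumes ap: "appell A"
  shows "(\<Sum>a\<le>m. hA A x a * ((-1)^(m-a) * eA A x (m-a))) = (if m = 0 then 1 else 0)"
proof -
  have "fneg (inverse (fneg (Hs A x))) = inverse (Hs A x)"
    using fneg_inverse[of "fneg (Hs A x)"] Hs_0[OF ap] by simp
  hence "(Hs A x * fneg (inverse (fneg (Hs A x)))) $ m = (if m = 0 then 1 else 0)"
    using inverse_mult_eq_1'[of "Hs A x"] Hs_0[OF ap] by (simp add: fps_one_nth)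
  thus ?thesis by (simp add: fps_mult_nth eA_def Hs_def atLeast0AtMost)
qed

lemma h1_rel: "(\<Sum>a\<le>m. h1 a * ((-1)^(m-a) * h1 (m-a))) = (if m = 0 then 1 else 0)"
proof -
  have e: "Abs_fps h1 = fps_exp 1" by (rule fps_ext) (simp add: h1_def)
  have "(Abs_fps h1 * fneg (Abs_fps h1)) $ m = (if m = 0 then 1 else 0)"
    unfolding e fneg_exp exp_times_exp_neg by (simp add: fps_one_nth)
  thus ?thesis by (simp add: fps_mult_nth atLeast0AtMost)
qed

lemma h1_0: "h1 0 = 1" by (simp add: h1_def)



lemma c_iff:
  assumes ap: "appell A"
  shows "(\<forall>n. 0 < n \<and> even n \<longrightarrow> appell_c A n = 0) \<longleftrightarrow> appell_f A * fneg (appell_f A) = 1"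
proof -
  define F where "F = appell_f A"
  define L where "L = fps_log F"
  define D where "D = fps_deriv F"
  define G where "G = F * fneg F"
  have F0: "F $ 0 = 1" using appell_f_0[OF ap] by (simp add: F_def)
  have nF0: "fneg F $ 0 = 1" using F0 by simp
  have G0: "G $ 0 = 1" using F0 by (simp add: G_def)
  have L0: "L $ 0 = 0" by (simp add: L_def fps_log_def)
  have s1: "(\<forall>n. 0 < n \<and> even n \<longrightarrow> appell_c A n = 0) \<longleftrightarrow> L + fneg L = 0"
  proof
    assume c: "\<forall>n. 0 < n \<and> even n \<longrightarrow> appell_c A n = 0"
    show "L + fneg L = 0"
    proof (rule fps_ext)
      fix n :: nat
      show "(L + fneg L) $ n = 0 $ n"
      proof (cases "n = 0")
        case True thus ?thesis using L0 by simp
      next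
        case False
        show ?thesis
        proof (cases "even n")
          case True
          hence "fact n * L $ n = 0" using c False by (simp add: appell_c_def L_def F_def)
          hence "L $ n = 0" by simp
          thus ?thesis by simp
        next
          case False thus ?thesis by simp
        qed
      qed
    qed
  next
    assume z: "L + fneg L = 0"
    show "\<forall>n. 0 < n \<and> even n \<longrightarrow> appell_c A n = 0"
    proof (intro allI impI)
      fix n :: nat assume n: "0 < n \<and> even n"
      have "(L + fneg L) $ n = 0" using z by simp
      hence "2 * L $ n = 0" using n by simp
      thus "appell_c A n = 0" by (simp add: appell_c_def L_def F_def)
    qed
  qed
  have s2: "L + fneg L = 0 \<longleftrightarrow> fps_deriv (L + fneg L) = 0"
  proof
    assume "fps_deriv (L + fneg L) = 0"
    hence "L + fneg L = fps_const ((L + fneg L) $ 0)" by (simp only: fps_deriv_eq_0_iff)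
    thus "L + fneg L = 0" using L0 by simp
  qed simp
  have dL: "fps_deriv L = D * inverse F"
    unfolding L_def fps_log_def fps_deriv_fps_integral D_def using F0 by (simp add: fps_divide_unit)
  have dnF: "fneg D = - fps_deriv (fneg F)" by (simp add: fneg_deriv D_def)
  have s3: "fps_deriv (L + fneg L) * G = fps_deriv G"
  proof -
    have "fps_deriv (L + fneg L) = D * inverse F + fps_deriv (fneg F) * inverse (fneg F)"
      by (simp add: fneg_deriv dL fneg_mult fneg_inverse F0 dnF)
    hence "fps_deriv (L + fneg L) * G =
        D * fneg F * (inverse F * F) + fps_deriv (fneg F) * F * (inverse (fneg F) * fneg F)"
      by (simp add: G_def algebra_simps)
    also have "\<dots> = D * fneg F + fps_deriv (fneg F) * F"
      using inverse_mult_eq_1[of F] inverse_mult_eq_1[of "fneg F"] F0 nF0 by simp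
    also have "\<dots> = fps_deriv G" by (simp add: G_def D_def algebra_simps)
    finally show ?thesis .
  qed
  have Gnz: "G \<noteq> 0" using G0 by auto
  have s4: "fps_deriv (L + fneg L) = 0 \<longleftrightarrow> fps_deriv G = 0"
    using s3 Gnz by (metis mult_eq_0_iff mult_zero_left)
  have s5: "fps_deriv G = 0 \<longleftrightarrow> G = 1"
  proof
    assume "fps_deriv G = 0"
    hence "G = fps_const (G $ 0)" by (simp only: fps_deriv_eq_0_iff)
    thus "G = 1" using G0 by simp
  qed simp
  show ?thesis using s1 s2 s4 s5 by (simp add: G_def F_def)
qed

lemma JT_single: "JT g [n] = g n"
proof -
  have "det (mat 1 1 (\<lambda>(i,j). hz g (int ([n] ! (1 - 1 - j)) + int j - int i))) =
     mat 1 1 (\<lambda>(i,j). hz g (int ([n] ! (1 - 1 - j)) + int j - int i)) $$ (0,0)"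
    by (rule det_single) simp
  thus ?thesis by (simp add: JT_def hz_def)
qed

lemma JT_nil: "JT g [] = 1" by (simp add: JT_def)

lemma conj_single: "0 < n \<Longrightarrow> conj_partition [n] = replicate n 1"
  by (rule nth_equalityI) (auto simp: conj_partition_def simp del: upt_Suc)

lemma partition_single: "0 < n \<Longrightarrow> is_partition [n]"
  by (simp add: is_partition_def)

lemma poly_A_hA: "poly (A n) x = fact n * hA A x n" by (simp add: hA_def)

lemma hA_0: "appell A \<Longrightarrow> hA A x 0 = 1" by (simp add: hA_def appell_def)

lemma appell_single:
  assumes ap: "appell A" and n: "0 < n"
  shows "appell_partition A [n] = A n"
proof -
  have "poly (appell_partition A [n]) x = poly (A n) x" for x
    by (simp add: poly_appell_partition[OF ap] JT_single h1_def hA_def)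
  thus ?thesis using poly_eq_poly_eq_iff by blast
qed

lemma poly_dual:
  assumes ap: "appell A"
  shows "poly (appell_dual A n) x = fact n * eA A x n"
proof (cases "n = 0")
  case True
  thus ?thesis by (simp add: appell_dual_def poly_appell_partition[OF ap] JT_nil eA_0[OF ap])
next
  case False
  hence n: "0 < n" by simp
  have a: "JT (hA A x) (conj_partition [n]) = JT (eA A x) [n]"
    by (rule dual_JT[OF partition_single[OF n] hA_0[OF ap] eA_rel'[OF ap], symmetric])
  have b: "JT h1 (conj_partition [n]) = JT h1 [n]"
    by (rule dual_JT[OF partition_single[OF n] h1_0 h1_rel, symmetric])
  show ?thesis unfolding appell_dual_def poly_appell_partition[OF ap] conj_single[OF n, symmetric] a b
    by (simp add: JT_single h1_def)
qed

lemma hA_eA_iff: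
  assumes ap: "appell A"
  shows "(\<forall>n. hA A x n = eA A x n) \<longleftrightarrow> appell_f A * fneg (appell_f A) = 1"
proof -
  define H where "H = Hs A x"
  have H0: "fneg H $ 0 = 1" using Hs_0[OF ap] by (simp add: H_def)
  have HG: "H * fneg H = appell_f A * fneg (appell_f A)"
  proof -
    have "H * fneg H = (fps_exp x * fps_exp (- x)) * (appell_f A * fneg (appell_f A))"
      by (simp add: H_def Hs_exp[OF ap] fneg_mult fneg_exp algebra_simps)
    thus ?thesis by (simp add: exp_times_exp_neg)
  qed
  have "(\<forall>n. hA A x n = eA A x n) \<longleftrightarrow> H = inverse (fneg H)"
    by (auto simp: H_def Hs_def eA_def fps_eq_iff)
  also have "\<dots> \<longleftrightarrow> H * fneg H = 1"
  proof
    assume "H = inverse (fneg H)"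
    thus "H * fneg H = 1" using inverse_mult_eq_1[of "fneg H"] H0 by simp
  next
    assume "H * fneg H = 1"
    hence "fneg H * H = 1" by (simp add: mult.commute)
    thus "H = inverse (fneg H)" using fps_inverse_unique by metis
  qed
  finally show ?thesis using HG by simp
qed

theorem corollary5p7:
  fixes A :: "nat \<Rightarrow> complex poly"
  assumes "appell A"
  shows "((\<forall>n. A n = appell_dual A n) \<longleftrightarrow>
           (\<forall>lam. is_partition lam \<longrightarrow>
                  appell_partition A lam = appell_partition A (conj_partition lam)))
       \<and> ((\<forall>lam. is_partition lam \<longrightarrow>
                  appell_partition A lam = appell_partition A (conj_partition lam)) \<longleftrightarrow>
           (\<forall>n. 0 < n \<and> even n \<longrightarrow> appell_c A n = 0))"
proof -
  note ap = assms
  define G where "G = appell_f A * fneg (appell_f A)"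
  define Sa where "Sa = (\<forall>n. A n = appell_dual A n)"
  define Sb where "Sb = (\<forall>lam. is_partition lam \<longrightarrow>
                  appell_partition A lam = appell_partition A (conj_partition lam))"
  define Sc where "Sc = (\<forall>n. 0 < n \<and> even n \<longrightarrow> appell_c A n = 0)"
  have Sc_iff: "Sc \<longleftrightarrow> G = 1" unfolding Sc_def G_def by (rule c_iff[OF ap])
  have Sa_iff: "Sa \<longleftrightarrow> (\<forall>x n. hA A x n = eA A x n)"
  proof -
    have "A n = appell_dual A n \<longleftrightarrow> (\<forall>x. hA A x n = eA A x n)" for n
    proof -
      have "A n = appell_dual A n \<longleftrightarrow> (\<forall>x. poly (A n) x = poly (appell_dual A n) x)"
        using poly_eq_poly_eq_iff[of "A n" "appell_dual A n"] by (auto simp: fun_eq_iff)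
      also have "\<dots> \<longleftrightarrow> (\<forall>x. hA A x n = eA A x n)"
        by (simp add: poly_A_hA[of A] poly_dual[OF ap])
      finally show ?thesis .
    qed
    thus ?thesis unfolding Sa_def by blast
  qed
  have Sa_G: "Sa \<longleftrightarrow> G = 1"
    unfolding Sa_iff G_def using hA_eA_iff[OF ap] by blast
  have G_Sb: "G = 1 \<Longrightarrow> Sb"
  proof -
    assume G1: "G = 1"
    have he: "hA A x = eA A x" for x using hA_eA_iff[OF ap, of x] G1 by (auto simp: G_def)
    show Sb unfolding Sb_def
    proof (intro allI impI)
      fix lam assume lp: "is_partition lam"
      have "poly (appell_partition A lam) x = poly (appell_partition A (conj_partition lam)) x" for x
      proof -
        have a: "JT (hA A x) lam = JT (eA A x) (conj_partition lam)"
          by (rule dual_JT[OF lp eA_0[OF ap] eA_rel[OF ap]])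
        have b: "JT h1 lam = JT h1 (conj_partition lam)"
          by (rule dual_JT[OF lp h1_0 h1_rel])
        show ?thesis unfolding poly_appell_partition[OF ap] a b he[symmetric] ..
      qed
      thus "appell_partition A lam = appell_partition A (conj_partition lam)"
        using poly_eq_poly_eq_iff by blast
    qed
  qed
  have Sb_Sa: "Sb \<Longrightarrow> Sa"
  proof -
    assume sb: Sb
    show Sa unfolding Sa_def
    proof
      fix n
      show "A n = appell_dual A n"
      proof (cases "n = 0")
        case True
        have "A 0 = 1" using ap by (simp add: appell_def)
        moreover have "appell_dual A 0 = 1"
        proof -
          have "poly (appell_dual A 0) x = poly 1 x" for x
            by (simp add: poly_dual[OF ap] eA_0[OF ap])
          thus ?thesis using poly_eq_poly_eq_iff by blast
        qed
        ultimately show ?thesis using True by simp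
      next
        case False
        hence n: "0 < n" by simp
        have "appell_partition A [n] = appell_partition A (conj_partition [n])"
          using sb partition_single[OF n] by (simp add: Sb_def)
        thus ?thesis using appell_single[OF ap n] conj_single[OF n] by (simp add: appell_dual_def)
      qed
    qed
  qed
  have "(Sa \<longleftrightarrow> Sb) \<and> (Sb \<longleftrightarrow> Sc)" using Sa_G Sc_iff G_Sb Sb_Sa by blast
  thus ?thesis unfolding Sa_def Sb_def Sc_def .
qed


end
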